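(* The quadric surface $Q$ is tangent to all five coordinate hyperplanes $x_i=0$ ($i=0,\ldots,4$) of $\mathbf{P}^4$. The points of tangency are $(0:3:3:1:1)$, $(3:0:3:1:1)$, $(3:3:0:1:1)$, $(1:1:1:0:1)$, and $(1:1:1:1:0)$.
   Context: $Q\subset\mathbf{P}^4$ is the quadric surface $l=q=0$ with $l:=x_0+x_1+x_2-3x_3-3x_4$ and $q:=x_0^2+x_1^2+x_2^2+9x_3^2-x_0x_1-x_0x_2-3x_0x_3-x_1x_2-3x_1x_3-3x_2x_3$. A surface $S\subset\mathbf{P}^4$ is tangent to a hyperplane $H$ at a point $P\in S$ if the tangent plane $T_PS$ is contained in $H$. *)

theory Defs
  imports "HOL-Analysis.Analysis" "HOL-Library.Numeral_Type"
begin

text \<open>Homogeneous coordinates (x0:...:x4) of P^4 over the complex numbers are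
  represented by vectors in complex^5, indexed by the type 5 = {0,1,2,3,4}.\<close>

definition pt5 :: "complex \<Rightarrow> complex \<Rightarrow> complex \<Rightarrow> complex \<Rightarrow> complex \<Rightarrow> complex^5" where
  "pt5 a b c d e = (\<chi> i. if i = 0 then a else if i = 1 then b else if i = 2 then c
                          else if i = 3 then d else e)"

definition lQ :: "complex^5 \<Rightarrow> complex" where
  "lQ x = x$0 + x$1 + x$2 - 3 * x$3 - 3 * x$4"

definition qQ :: "complex^5 \<Rightarrow> complex" where
  "qQ x = (x$0)^2 + (x$1)^2 + (x$2)^2 + 9 * (x$3)^2
          - x$0 * x$1 - x$0 * x$2 - 3 * x$0 * x$3 - x$1 * x$2 - 3 * x$1 * x$3 - 3 * x$2 * x$3"

definition on_Q :: "complex^5 \<Rightarrow> bool" where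
  "on_Q P \<longleftrightarrow> P \<noteq> 0 \<and> lQ P = 0 \<and> qQ P = 0"

text \<open>The (embedded projective) tangent plane T_P Q is the projectivisation of the
  common kernel of the differentials of l and q at P.  Q is tangent to the
  coordinate hyperplane {x_j = 0} at P if T_P Q is contained in it.\<close>
definition tangent_to_coord_hyperplane :: "5 \<Rightarrow> complex^5 \<Rightarrow> bool" where
  "tangent_to_coord_hyperplane j P \<longleftrightarrow> on_Q P \<and>
     (\<forall>v. frechet_derivative lQ (at P) v = 0 \<and> frechet_derivative qQ (at P) v = 0
          \<longrightarrow> v $ j = 0)"

definition proj_eq :: "complex^5 \<Rightarrow> complex^5 \<Rightarrow> bool" where
  "proj_eq x y \<longleftrightarrow> (\<exists>c. c \<noteq> 0 \<and> x = c *s y)"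

end

theory Submission
  imports Defs
begin

lemma nth_deriv[derivative_intros]: assumes "f' = (\<lambda>v. v$i)" shows "((\<lambda>x::complex^5. x$i) has_derivative f') F"
  unfolding assms by (rule bounded_linear_imp_has_derivative[OF bounded_linear_vec_nth])
lemma dl: "frechet_derivative lQ (at P) = (\<lambda>v. v$0 + v$1 + v$2 - 3 * v$3 - 3 * v$4)"
proof -
  have "(lQ has_derivative (\<lambda>v. v$0 + v$1 + v$2 - 3 * v$3 - 3 * v$4)) (at P)"
    unfolding lQ_def by (rule has_derivative_eq_rhs, (intro derivative_eq_intros refl)+) auto
  then show ?thesis by (rule frechet_derivative_at[symmetric])
qed
definition DQ :: "complex^5 \<Rightarrow> complex^5 \<Rightarrow> complex" where "DQ P = (\<lambda>v::complex^5. (2*P$0 - P$1 - P$2 - 3*P$3) * v$0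
   + (2*P$1 - P$0 - P$2 - 3*P$3) * v$1 + (2*P$2 - P$0 - P$1 - 3*P$3) * v$2
   + (18*P$3 - 3*P$0 - 3*P$1 - 3*P$2) * v$3)"
lemma dq: "frechet_derivative qQ (at P) = DQ P"
proof -
  have "(qQ has_derivative DQ P) (at P)"
    unfolding qQ_def DQ_def power2_eq_square
    apply (rule has_derivative_eq_rhs)
     apply (rule derivative_eq_intros nth_deriv refl | simp only:)+
    apply (simp add: algebra_simps fun_eq_iff)
    done
  then show ?thesis by (rule frechet_derivative_at[symmetric])
qed
lemma pt5_nth[simp]: "pt5 a b c d e $ 0 = a" "pt5 a b c d e $ 1 = b" "pt5 a b c d e $ 2 = c"
  "pt5 a b c d e $ 3 = d" "pt5 a b c d e $ 4 = e"
  by (simp_all add: pt5_def)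
lemma exhaust_5: fixes x :: 5 shows "x = 0 \<or> x = 1 \<or> x = 2 \<or> x = 3 \<or> x = 4"
proof (induct x)
  case (of_int z)
  then have "z = 0 \<or> z = 1 \<or> z = 2 \<or> z = 3 \<or> z = 4" by (simp, presburger)
  then show ?case by (elim disjE) simp_all
qed
lemma vec5_eq: "(x::'a^5) = y \<longleftrightarrow> x$0 = y$0 \<and> x$1 = y$1 \<and> x$2 = y$2 \<and> x$3 = y$3 \<and> x$4 = y$4"
proof
  assume h: "x$0 = y$0 \<and> x$1 = y$1 \<and> x$2 = y$2 \<and> x$3 = y$3 \<and> x$4 = y$4"
  show "x = y" unfolding vec_eq_iff
  proof
    fix i :: 5
    show "x$i = y$i" using h exhaust_5[of i] by auto
  qed
qed simp

lemma tangent_iff: "tangent_to_coord_hyperplane j P \<longleftrightarrow> P \<noteq> 0 \<and> lQ P = 0 \<and> qQ P = 0 \<and>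
  (\<forall>v. v$0 + v$1 + v$2 - 3 * v$3 - 3 * v$4 = 0 \<and> DQ P v = 0 \<longrightarrow> v$j = 0)"
  unfolding tangent_to_coord_hyperplane_def on_Q_def dl dq by simp

lemma key:
  fixes u w :: "complex^5"
  assumes H: "\<forall>v. v$0 + v$1 + v$2 - 3 * v$3 - 3 * v$4 = 0 \<and> DQ P v = 0 \<longrightarrow> v$j = 0"
  and "u$0 + u$1 + u$2 - 3 * u$3 - 3 * u$4 = 0" "w$0 + w$1 + w$2 - 3 * w$3 - 3 * w$4 = 0"
  and "u$j = 1" "w$j = 0"
  shows "DQ P w = 0"
proof -
  let ?v = "DQ P u *s w - DQ P w *s u"
  have "?v$0 + ?v$1 + ?v$2 - 3 * ?v$3 - 3 * ?v$4 = DQ P u * (w$0 + w$1 + w$2 - 3 * w$3 - 3 * w$4)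
     - DQ P w * (u$0 + u$1 + u$2 - 3 * u$3 - 3 * u$4)" by (simp add: algebra_simps)
  also have "\<dots> = 0" using assms by simp
  finally have 1: "?v$0 + ?v$1 + ?v$2 - 3 * ?v$3 - 3 * ?v$4 = 0" .
  have 2: "DQ P ?v = 0" unfolding DQ_def by (simp add: algebra_simps)
  have "?v $ j = 0" using H 1 2 by blast
  then show ?thesis using assms(4,5) by simp
qed

lemma L_unf: "lQ P = P$0 + P$1 + P$2 - 3 * P$3 - 3 * P$4" by (simp add: lQ_def)

lemma lin3: "(x::complex)*3 = y*3 + z*9 \<Longrightarrow> x = y + 3*z" by algebra
lemma lin3': "(x::complex)*3 = 3*y + z*9 \<Longrightarrow> x = y + 3*z" by algebra

lemma case0: "tangent_to_coord_hyperplane 0 P \<longleftrightarrow> proj_eq P (pt5 0 3 3 1 1)"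
proof
  assume T: "tangent_to_coord_hyperplane 0 P"
  then have nz: "P \<noteq> 0" and l: "lQ P = 0" and H: "\<forall>v. v$0 + v$1 + v$2 - 3 * v$3 - 3 * v$4 = 0 \<and> DQ P v = 0 \<longrightarrow> v$0 = 0"
    unfolding tangent_iff by auto
  have e1: "DQ P (pt5 0 1 (-1) 0 0) = 0" by (rule key[OF H, of "pt5 1 (-1) 0 0 0"]) simp_all
  have e2: "DQ P (pt5 0 3 0 0 1) = 0" by (rule key[OF H, of "pt5 1 (-1) 0 0 0"]) simp_all
  have e3: "DQ P (pt5 0 3 0 1 0) = 0" by (rule key[OF H, of "pt5 1 (-1) 0 0 0"]) simp_all
  have a1: "P$2 = P$1" using e1  by (simp add: DQ_def L_unf algebra_simps) (rule lin3 lin3', simp)?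
  have a2: "P$1 = P$0 + 3 * P$3" using e2 a1 by (simp add: DQ_def L_unf algebra_simps) (rule lin3 lin3', simp)?
  have a3: "P$0 = 0" using e3 a1 a2 by (simp add: DQ_def L_unf algebra_simps) (rule lin3 lin3', simp)?
  have a4: "P$4 = P$3" using l a1 a2 a3 by (simp add: DQ_def L_unf algebra_simps) (rule lin3 lin3', simp)?
  have c: "P$3 \<noteq> 0" using nz a1 a2 a3 a4 by (auto simp: vec5_eq)
  show "proj_eq P (pt5 0 3 3 1 1)" unfolding proj_eq_def
    using c a1 a2 a3 a4 by (intro exI[of _ "P$3"]) (simp add: vec5_eq)
next
  assume "proj_eq P (pt5 0 3 3 1 1)"
  then obtain c where c: "c \<noteq> 0" and P: "P = c *s pt5 0 3 3 1 1" by (auto simp: proj_eq_def)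
  show "tangent_to_coord_hyperplane 0 P" unfolding tangent_iff
  proof (intro conjI allI impI)
    show "P \<noteq> 0" using c P by (auto simp: vec5_eq)
    show "lQ P = 0" "qQ P = 0" using P by (simp_all add: lQ_def qQ_def power2_eq_square)
    fix v :: "complex^5" assume h: "v$0 + v$1 + v$2 - 3 * v$3 - 3 * v$4 = 0 \<and> DQ P v = 0"
    have "v$0 = - DQ P v / (9*c)"
      using c P by (simp add: DQ_def field_simps)
    then show "v$0 = 0" using h by simp
  qed
qed

lemma case1: "tangent_to_coord_hyperplane 1 P \<longleftrightarrow> proj_eq P (pt5 3 0 3 1 1)"
proof
  assume T: "tangent_to_coord_hyperplane 1 P"
  then have nz: "P \<noteq> 0" and l: "lQ P = 0" and H: "\<forall>v. v$0 + v$1 + v$2 - 3 * v$3 - 3 * v$4 = 0 \<and> DQ P v = 0 \<longrightarrow> v$1 = 0"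
    unfolding tangent_iff by auto
  have e1: "DQ P (pt5 1 0 (-1) 0 0) = 0" by (rule key[OF H, of "pt5 (-1) 1 0 0 0"]) simp_all
  have e2: "DQ P (pt5 3 0 0 0 1) = 0" by (rule key[OF H, of "pt5 (-1) 1 0 0 0"]) simp_all
  have e3: "DQ P (pt5 3 0 0 1 0) = 0" by (rule key[OF H, of "pt5 (-1) 1 0 0 0"]) simp_all
  have a1: "P$2 = P$0" using e1  by (simp add: DQ_def L_unf algebra_simps) (rule lin3 lin3', simp)?
  have a2: "P$0 = P$1 + 3 * P$3" using e2 a1 by (simp add: DQ_def L_unf algebra_simps) (rule lin3 lin3', simp)?
  have a3: "P$1 = 0" using e3 a1 a2 by (simp add: DQ_def L_unf algebra_simps) (rule lin3 lin3', simp)?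
  have a4: "P$4 = P$3" using l a1 a2 a3 by (simp add: DQ_def L_unf algebra_simps) (rule lin3 lin3', simp)?
  have c: "P$3 \<noteq> 0" using nz a1 a2 a3 a4 by (auto simp: vec5_eq)
  show "proj_eq P (pt5 3 0 3 1 1)" unfolding proj_eq_def
    using c a1 a2 a3 a4 by (intro exI[of _ "P$3"]) (simp add: vec5_eq)
next
  assume "proj_eq P (pt5 3 0 3 1 1)"
  then obtain c where c: "c \<noteq> 0" and P: "P = c *s pt5 3 0 3 1 1" by (auto simp: proj_eq_def)
  show "tangent_to_coord_hyperplane 1 P" unfolding tangent_iff
  proof (intro conjI allI impI)
    show "P \<noteq> 0" using c P by (auto simp: vec5_eq)
    show "lQ P = 0" "qQ P = 0" using P by (simp_all add: lQ_def qQ_def power2_eq_square)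
    fix v :: "complex^5" assume h: "v$0 + v$1 + v$2 - 3 * v$3 - 3 * v$4 = 0 \<and> DQ P v = 0"
    have "v$1 = - DQ P v / (9*c)"
      using c P by (simp add: DQ_def field_simps)
    then show "v$1 = 0" using h by simp
  qed
qed

lemma case2: "tangent_to_coord_hyperplane 2 P \<longleftrightarrow> proj_eq P (pt5 3 3 0 1 1)"
proof
  assume T: "tangent_to_coord_hyperplane 2 P"
  then have nz: "P \<noteq> 0" and l: "lQ P = 0" and H: "\<forall>v. v$0 + v$1 + v$2 - 3 * v$3 - 3 * v$4 = 0 \<and> DQ P v = 0 \<longrightarrow> v$2 = 0"
    unfolding tangent_iff by auto
  have e1: "DQ P (pt5 1 (-1) 0 0 0) = 0" by (rule key[OF H, of "pt5 (-1) 0 1 0 0"]) simp_all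
  have e2: "DQ P (pt5 3 0 0 0 1) = 0" by (rule key[OF H, of "pt5 (-1) 0 1 0 0"]) simp_all
  have e3: "DQ P (pt5 3 0 0 1 0) = 0" by (rule key[OF H, of "pt5 (-1) 0 1 0 0"]) simp_all
  have a1: "P$1 = P$0" using e1  by (simp add: DQ_def L_unf algebra_simps) (rule lin3 lin3', simp)?
  have a2: "P$0 = P$2 + 3 * P$3" using e2 a1 by (simp add: DQ_def L_unf algebra_simps) (rule lin3 lin3', simp)?
  have a3: "P$2 = 0" using e3 a1 a2 by (simp add: DQ_def L_unf algebra_simps) (rule lin3 lin3', simp)?
  have a4: "P$4 = P$3" using l a1 a2 a3 by (simp add: DQ_def L_unf algebra_simps) (rule lin3 lin3', simp)?
  have c: "P$3 \<noteq> 0" using nz a1 a2 a3 a4 by (auto simp: vec5_eq)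
  show "proj_eq P (pt5 3 3 0 1 1)" unfolding proj_eq_def
    using c a1 a2 a3 a4 by (intro exI[of _ "P$3"]) (simp add: vec5_eq)
next
  assume "proj_eq P (pt5 3 3 0 1 1)"
  then obtain c where c: "c \<noteq> 0" and P: "P = c *s pt5 3 3 0 1 1" by (auto simp: proj_eq_def)
  show "tangent_to_coord_hyperplane 2 P" unfolding tangent_iff
  proof (intro conjI allI impI)
    show "P \<noteq> 0" using c P by (auto simp: vec5_eq)
    show "lQ P = 0" "qQ P = 0" using P by (simp_all add: lQ_def qQ_def power2_eq_square)
    fix v :: "complex^5" assume h: "v$0 + v$1 + v$2 - 3 * v$3 - 3 * v$4 = 0 \<and> DQ P v = 0"
    have "v$2 = - DQ P v / (9*c)"
      using c P by (simp add: DQ_def field_simps)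
    then show "v$2 = 0" using h by simp
  qed
qed

lemma case3: "tangent_to_coord_hyperplane 3 P \<longleftrightarrow> proj_eq P (pt5 1 1 1 0 1)"
proof
  assume T: "tangent_to_coord_hyperplane 3 P"
  then have nz: "P \<noteq> 0" and l: "lQ P = 0" and H: "\<forall>v. v$0 + v$1 + v$2 - 3 * v$3 - 3 * v$4 = 0 \<and> DQ P v = 0 \<longrightarrow> v$3 = 0"
    unfolding tangent_iff by auto
  have e1: "DQ P (pt5 1 (-1) 0 0 0) = 0" by (rule key[OF H, of "pt5 3 0 0 1 0"]) simp_all
  have e2: "DQ P (pt5 0 1 (-1) 0 0) = 0" by (rule key[OF H, of "pt5 3 0 0 1 0"]) simp_all
  have e3: "DQ P (pt5 3 0 0 0 1) = 0" by (rule key[OF H, of "pt5 3 0 0 1 0"]) simp_all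
  have a1: "P$1 = P$0" using e1  by (simp add: DQ_def L_unf algebra_simps) (rule lin3 lin3', simp)?
  have a2: "P$2 = P$0" using e2 a1 by (simp add: DQ_def L_unf algebra_simps) (rule lin3 lin3', simp)?
  have a3: "P$3 = 0" using e3 a1 a2 by (simp add: DQ_def L_unf algebra_simps) (rule lin3 lin3', simp)?
  have a4: "P$4 = P$0" using l a1 a2 a3 by (simp add: DQ_def L_unf algebra_simps) (rule lin3 lin3', simp)?
  have c: "P$0 \<noteq> 0" using nz a1 a2 a3 a4 by (auto simp: vec5_eq)
  show "proj_eq P (pt5 1 1 1 0 1)" unfolding proj_eq_def
    using c a1 a2 a3 a4 by (intro exI[of _ "P$0"]) (simp add: vec5_eq)
next
  assume "proj_eq P (pt5 1 1 1 0 1)"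
  then obtain c where c: "c \<noteq> 0" and P: "P = c *s pt5 1 1 1 0 1" by (auto simp: proj_eq_def)
  show "tangent_to_coord_hyperplane 3 P" unfolding tangent_iff
  proof (intro conjI allI impI)
    show "P \<noteq> 0" using c P by (auto simp: vec5_eq)
    show "lQ P = 0" "qQ P = 0" using P by (simp_all add: lQ_def qQ_def power2_eq_square)
    fix v :: "complex^5" assume h: "v$0 + v$1 + v$2 - 3 * v$3 - 3 * v$4 = 0 \<and> DQ P v = 0"
    have "v$3 = - DQ P v / (9*c)"
      using c P by (simp add: DQ_def field_simps)
    then show "v$3 = 0" using h by simp
  qed
qed

lemma case4: "tangent_to_coord_hyperplane 4 P \<longleftrightarrow> proj_eq P (pt5 1 1 1 1 0)"
proof
  assume T: "tangent_to_coord_hyperplane 4 P"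
  then have nz: "P \<noteq> 0" and l: "lQ P = 0" and H: "\<forall>v. v$0 + v$1 + v$2 - 3 * v$3 - 3 * v$4 = 0 \<and> DQ P v = 0 \<longrightarrow> v$4 = 0"
    unfolding tangent_iff by auto
  have e1: "DQ P (pt5 1 (-1) 0 0 0) = 0" by (rule key[OF H, of "pt5 3 0 0 0 1"]) simp_all
  have e2: "DQ P (pt5 0 1 (-1) 0 0) = 0" by (rule key[OF H, of "pt5 3 0 0 0 1"]) simp_all
  have e3: "DQ P (pt5 3 0 0 1 0) = 0" by (rule key[OF H, of "pt5 3 0 0 0 1"]) simp_all
  have a1: "P$1 = P$0" using e1 by (simp add: DQ_def algebra_simps)
  have a2: "P$2 = P$0" using e2 a1 by (simp add: DQ_def algebra_simps)
  have a3: "P$3 = P$0" using e3 a1 a2 by (simp add: DQ_def algebra_simps)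
  have a4: "P$4 = 0" using l a1 a2 a3 by (simp add: L_unf algebra_simps)
  have c: "P$0 \<noteq> 0" using nz a1 a2 a3 a4 by (auto simp: vec5_eq)
  show "proj_eq P (pt5 1 1 1 1 0)" unfolding proj_eq_def
    using c a1 a2 a3 a4 by (intro exI[of _ "P$0"]) (simp add: vec5_eq)
next
  assume "proj_eq P (pt5 1 1 1 1 0)"
  then obtain c where c: "c \<noteq> 0" and P: "P = c *s pt5 1 1 1 1 0" by (auto simp: proj_eq_def)
  show "tangent_to_coord_hyperplane 4 P" unfolding tangent_iff
  proof (intro conjI allI impI)
    show "P \<noteq> 0" using c P by (auto simp: vec5_eq)
    show "lQ P = 0" "qQ P = 0" using P by (simp_all add: lQ_def qQ_def power2_eq_square)
    fix v :: "complex^5" assume h: "v$0 + v$1 + v$2 - 3 * v$3 - 3 * v$4 = 0 \<and> DQ P v = 0"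
    have "v$4 = -(v$0 + v$1 + v$2 - 3 * v$3 - 3 * v$4)/3 - DQ P v / (9*c)"
      using c P by (simp add: DQ_def field_simps)
    then show "v$4 = 0" using h by simp
  qed
qed
theorem mainTheorem13:
  shows "(\<forall>P. tangent_to_coord_hyperplane 0 P \<longleftrightarrow> proj_eq P (pt5 0 3 3 1 1)) \<and>
         (\<forall>P. tangent_to_coord_hyperplane 1 P \<longleftrightarrow> proj_eq P (pt5 3 0 3 1 1)) \<and>
         (\<forall>P. tangent_to_coord_hyperplane 2 P \<longleftrightarrow> proj_eq P (pt5 3 3 0 1 1)) \<and>
         (\<forall>P. tangent_to_coord_hyperplane 3 P \<longleftrightarrow> proj_eq P (pt5 1 1 1 0 1)) \<and>
         (\<forall>P. tangent_to_coord_hyperplane 4 P \<longleftrightarrow> proj_eq P (pt5 1 1 1 1 0))"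
  using case0 case1 case2 case3 case4 by blast

end
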